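(* Let $B \subset \mathbb{R}^3$ be an open ball and let $\hat{P} \in \mathbb{R}^3 \setminus B$. Then: (i) if $\hat{P}' \in C^+(B,\hat{P})$, then $\mathrm{cl}(C^+(B,\hat{P}')) \subset C^+(B,\hat{P})$; (ii) if $\hat{P}' \in C^+(B,\hat{P})$ and $\eta \in \mathbb{R}^3$ satisfies $\hat{P}' + \eta \in C^+(B,\hat{P}')$, then $\hat{P} + \eta \in C^+(B,\hat{P})$; (iii) if $\hat{P}' \in C^+_0(B,\hat{P})$, then $C^+(B,\hat{P}') \subset C^+(B,\hat{P})$.
   Context: For a bounded convex set $B \subset \mathbb{R}^3$ and a point $Q \in \mathbb{R}^3$ with $Q \notin B$, the positive half-cone $C^+(B,Q)$ is the set of points $Y \in \mathbb{R}^3$ for which there exist $x' \in B$ and $\alpha > 0$ such that $Y - Q = \alpha (Q - x')$, and $C^+_0(B,Q) := C^+(B,Q) \cup \{Q\}$. Here $\mathrm{cl}(S)$ denotes the topological closure of $S$. *)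

theory Defs
  imports "HOL-Analysis.Analysis"
begin

definition pos_half_cone :: "(real^3) set \<Rightarrow> real^3 \<Rightarrow> (real^3) set" where
  "pos_half_cone B Q = {Y. \<exists>x'\<in>B. \<exists>\<alpha>::real. \<alpha> > 0 \<and> Y - Q = \<alpha> *\<^sub>R (Q - x')}"

definition pos_half_cone0 :: "(real^3) set \<Rightarrow> real^3 \<Rightarrow> (real^3) set" where
  "pos_half_cone0 B Q = pos_half_cone B Q \<union> {Q}"

end

theory Submission
  imports Defs
begin

lemma comb_lemma:
  fixes c P x y :: "real^3"
  assumes x: "x \<in> ball c r" and y: "y \<in> cball c r" and a: "a > 0" and b: "b \<ge> 0"
  shows "\<exists>w\<in>ball c r. \<exists>g>0. a *\<^sub>R (P - x) + b *\<^sub>R (P - y) = g *\<^sub>R (P - w)"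
proof -
  define g where "g = a + b"
  have g: "g > 0" using a b g_def by simp
  define w where "w = (a / g) *\<^sub>R x + (b / g) *\<^sub>R y"
  have gw: "g *\<^sub>R w = a *\<^sub>R x + b *\<^sub>R y" using g by (simp add: w_def scaleR_add_right)
  have eq: "a *\<^sub>R (P - x) + b *\<^sub>R (P - y) = g *\<^sub>R (P - w)"
  proof -
    have "g *\<^sub>R (P - w) = g *\<^sub>R P - (a *\<^sub>R x + b *\<^sub>R y)" by (simp only: scaleR_diff_right gw)
    thus ?thesis by (simp add: g_def algebra_simps)
  qed
  have "w - c = (a / g) *\<^sub>R (x - c) + (b / g) *\<^sub>R (y - c)"
    using g by (simp add: w_def g_def algebra_simps add_divide_distrib[symmetric]
        scaleR_add_left[symmetric] del: scaleR_add_left)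
  hence "norm (w - c) \<le> (a / g) * norm (x - c) + (b / g) * norm (y - c)"
    using a b g by (metis (no_types, lifting) abs_of_nonneg divide_nonneg_nonneg less_imp_le
        norm_scaleR norm_triangle_ineq)
  also have "\<dots> < (a / g) * r + (b / g) * r"
  proof -
    have "norm (x - c) < r" using x by (simp add: dist_norm norm_minus_commute)
    moreover have "a / g > 0" using a g by simp
    ultimately have "(a / g) * norm (x - c) < (a / g) * r" by (simp only: mult_strict_left_mono)
    moreover have "(b / g) * norm (y - c) \<le> (b / g) * r"
    proof -
      have "norm (y - c) \<le> r" using y by (simp add: dist_norm norm_minus_commute)
      moreover have "b / g \<ge> 0" using b g by simp
      ultimately show ?thesis by (simp only: mult_left_mono)
    qed
    ultimately show ?thesis by linarith
  qed
  also have "\<dots> = ((a + b) / g) * r" by (metis add_divide_distrib distrib_right)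
  also have "\<dots> = r" using g by (simp add: g_def)
  finally have "w \<in> ball c r" by (simp add: dist_norm norm_minus_commute)
  thus ?thesis using eq g by blast
qed

lemma mem_cone: "w \<in> B \<Longrightarrow> g > 0 \<Longrightarrow> Y - P = g *\<^sub>R (P - w) \<Longrightarrow> Y \<in> pos_half_cone B P"
  unfolding pos_half_cone_def by blast

theorem proposition2:
  fixes c P :: "real^3" and r :: real
  assumes "r > 0" and "P \<notin> ball c r"
  shows "(\<forall>P'. P' \<in> pos_half_cone (ball c r) P \<longrightarrow>
            closure (pos_half_cone (ball c r) P') \<subseteq> pos_half_cone (ball c r) P)
       \<and> (\<forall>P' \<eta>. P' \<in> pos_half_cone (ball c r) P \<and> P' + \<eta> \<in> pos_half_cone (ball c r) P' \<longrightarrow>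
            P + \<eta> \<in> pos_half_cone (ball c r) P)
       \<and> (\<forall>P'. P' \<in> pos_half_cone0 (ball c r) P \<longrightarrow>
            pos_half_cone (ball c r) P' \<subseteq> pos_half_cone (ball c r) P)"
proof -
  have key: "Y \<in> pos_half_cone (ball c r) P"
    if x0: "x0 \<in> ball c r" and a: "a > 0" and P': "P' = P + a *\<^sub>R (P - x0)"
      and y: "y \<in> cball c r" and b: "b \<ge> 0" and Y: "Y = P' + b *\<^sub>R (P' - y)"
    for x0 a P' y b Y
  proof -
    have "Y - P = (a + b * a) *\<^sub>R (P - x0) + b *\<^sub>R (P - y)"
      by (simp add: Y P' algebra_simps)
    moreover have "a + b * a > 0" using a b by (simp add: add_pos_nonneg)
    moreover obtain w g where "w \<in> ball c r" "g > 0"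
      "(a + b * a) *\<^sub>R (P - x0) + b *\<^sub>R (P - y) = g *\<^sub>R (P - w)"
      using comb_lemma[OF x0 y \<open>a + b * a > 0\<close> b, of P] by blast
    ultimately show ?thesis using mem_cone[of w "ball c r" g Y P] by simp
  qed
  have outside: "norm (P' - c) > r"
    if x0: "x0 \<in> ball c r" and a: "a > 0" and P': "P' = P + a *\<^sub>R (P - x0)" for x0 a P'
  proof -
    have "P' - c = (1 + a) *\<^sub>R (P - c) - a *\<^sub>R (x0 - c)" by (simp add: P' algebra_simps)
    hence "norm (P' - c) \<ge> (1 + a) * norm (P - c) - a * norm (x0 - c)"
    proof -
      have "norm ((1 + a) *\<^sub>R (P - c)) - norm (a *\<^sub>R (x0 - c)) \<le> norm (P' - c)"
        using norm_triangle_ineq2 \<open>P' - c = _\<close> by metis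
      moreover have ab: "\<bar>1 + a\<bar> = 1 + a" "\<bar>a\<bar> = a" using a by auto
      moreover have "norm ((1 + a) *\<^sub>R (P - c)) = (1 + a) * norm (P - c)" by (simp only: norm_scaleR ab)
      moreover have "norm (a *\<^sub>R (x0 - c)) = a * norm (x0 - c)" by (simp only: norm_scaleR ab)
      ultimately show ?thesis by linarith
    qed
    moreover have "norm (P - c) \<ge> r" using assms(2) by (simp add: dist_norm norm_minus_commute)
    moreover have "norm (x0 - c) < r" using x0 by (simp add: dist_norm norm_minus_commute)
    ultimately have "norm (P' - c) \<ge> (1 + a) * r - a * norm (x0 - c)"
    proof -
      have "(1 + a) * r \<le> (1 + a) * norm (P - c)" using a \<open>norm (P - c) \<ge> r\<close> by simp
      thus ?thesis using \<open>norm (P' - c) \<ge> _\<close> by linarith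
    qed
    moreover have "a * norm (x0 - c) < a * r" using a \<open>norm (x0 - c) < r\<close> by simp
    ultimately show ?thesis by (simp add: algebra_simps)
  qed
  have P1: "closure (pos_half_cone (ball c r) P') \<subseteq> pos_half_cone (ball c r) P"
    if hP: "P' \<in> pos_half_cone (ball c r) P" for P'
  proof -
    obtain x0 a where x0: "x0 \<in> ball c r" and a: "a > 0" and P': "P' - P = a *\<^sub>R (P - x0)"
      using hP unfolding pos_half_cone_def by blast
    have P'e: "P' = P + a *\<^sub>R (P - x0)" using P' by (simp add: algebra_simps)
    define S where "S = (\<lambda>y. P' - y) ` cball c r"
    have cS: "compact S" unfolding S_def
      by (intro compact_continuous_image continuous_intros compact_cball)
    have "0 \<notin> S" using outside[OF x0 a P'e] by (auto simp: S_def dist_norm norm_minus_commute)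
    hence "closed (conic hull S)" using cS closed_conic_hull by blast
    hence cl: "closed ((\<lambda>z. P' + z) ` (conic hull S))" by (simp add: closed_translation)
    have "pos_half_cone (ball c r) P' \<subseteq> (\<lambda>z. P' + z) ` (conic hull S)"
    proof
      fix Y assume "Y \<in> pos_half_cone (ball c r) P'"
      then obtain x al where "x \<in> ball c r" "al > 0" "Y - P' = al *\<^sub>R (P' - x)"
        unfolding pos_half_cone_def by blast
      moreover have "al *\<^sub>R (P' - x) \<in> conic hull S" using calculation
        unfolding conic_hull_explicit S_def by force
      ultimately show "Y \<in> (\<lambda>z. P' + z) ` (conic hull S)"
        by (metis add.commute diff_add_cancel image_eqI)
    qed
    hence "closure (pos_half_cone (ball c r) P') \<subseteq> (\<lambda>z. P' + z) ` (conic hull S)"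
      using cl closure_minimal by blast
    also have "\<dots> \<subseteq> pos_half_cone (ball c r) P"
    proof
      fix Y assume "Y \<in> (\<lambda>z. P' + z) ` (conic hull S)"
      then obtain b y where "b \<ge> 0" "y \<in> cball c r" "Y = P' + b *\<^sub>R (P' - y)"
        unfolding conic_hull_explicit S_def by blast
      thus "Y \<in> pos_half_cone (ball c r) P" using key[OF x0 a P'e] by blast
    qed
    finally show ?thesis .
  qed
  have P2: "P + \<eta> \<in> pos_half_cone (ball c r) P"
    if hP: "P' \<in> pos_half_cone (ball c r) P" "P' + \<eta> \<in> pos_half_cone (ball c r) P'" for P' \<eta>
  proof -
    obtain x0 a where x0: "x0 \<in> ball c r" and a: "a > 0" and P': "P' - P = a *\<^sub>R (P - x0)"
      using hP(1) unfolding pos_half_cone_def by blast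
    obtain x al where x: "x \<in> ball c r" and al: "al > 0" and e: "\<eta> = al *\<^sub>R (P' - x)"
      using hP(2) unfolding pos_half_cone_def by auto
    have "P + \<eta> - P = (al * a) *\<^sub>R (P - x0) + al *\<^sub>R (P - x)"
    proof -
      have P'e: "P' = P + a *\<^sub>R (P - x0)" using P' by (simp add: algebra_simps)
      show ?thesis by (simp add: e P'e algebra_simps)
    qed
    moreover have "x \<in> cball c r" using x by simp
    ultimately show ?thesis using comb_lemma[OF x0 _ _ less_imp_le[OF al], of x "al * a" P] a al mem_cone
      by (metis mult_pos_pos)
  qed
  have P3: "pos_half_cone (ball c r) P' \<subseteq> pos_half_cone (ball c r) P"
    if hP: "P' \<in> pos_half_cone0 (ball c r) P" for P'
  proof (cases "P' = P")
    case True thus ?thesis by simp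
  next
    case False
    hence "P' \<in> pos_half_cone (ball c r) P" using hP by (simp add: pos_half_cone0_def)
    then obtain x0 a where x0: "x0 \<in> ball c r" and a: "a > 0" and P': "P' - P = a *\<^sub>R (P - x0)"
      unfolding pos_half_cone_def by blast
    have P'e: "P' = P + a *\<^sub>R (P - x0)" using P' by (simp add: algebra_simps)
    show ?thesis
    proof
      fix Y assume "Y \<in> pos_half_cone (ball c r) P'"
      then obtain x al where "x \<in> ball c r" "al > 0" "Y - P' = al *\<^sub>R (P' - x)"
        unfolding pos_half_cone_def by blast
      moreover hence "Y = P' + al *\<^sub>R (P' - x)" by (simp add: algebra_simps)
      ultimately show "Y \<in> pos_half_cone (ball c r) P" using key[OF x0 a P'e, of x al Y] by simp
    qed
  qed
  show ?thesis using P1 P2 P3 by blast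
qed

end
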